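(* Let $S$ be a quasi-thin scheme on $X$, let $\mathbb F$ be a field of characteristic $p$, $x\in X$, and $\mathcal T=\mathcal T(x)$ the Terwilliger $\mathbb F$-algebra of $S$ with respect to $x$. Then $\mathcal T$ is semisimple if and only if either $p\neq 2$, or $p=2$ and $S$ is a thin scheme.
   Context: Let $\mathbb{F}$ be a field of characteristic $p$ ($p=0$ or a prime) and $X$ a nonempty finite set. A scheme of class $d$ on $X$ is a partition $S=\{R_0,\dots,R_d\}$ of $X\times X$ into nonempty sets such that $R_0=\{(b,b):b\in X\}$; for each $c$ there is $c'$ with $R_{c'}=\{(f,e):(e,f)\in R_c\}$; and for all $i,j,k$ the intersection number $p_{ij}^k=|\{\ell\in X:(m,\ell)\in R_i,(\ell,n)\in R_j\}|$ does not depend on $(m,n)\in R_k$. The valency of $R_a$ is $k_a=p_{aa'}^0$. $S$ is thin if all $k_a=1$ and quasi-thin if all $k_a\le 2$. For $y\in X$, $yR_a=\{z:(y,z)\in R_a\}$. $A_a\in M_X(\mathbb F)$ is the $(0,1)$ adjacency matrix of $R_a$ and $E_a^*(y)$ is the diagonal $(0,1)$-matrix with ones exactly at the diagonal positions indexed by $yR_a$. The Terwilliger $\mathbb F$-algebra $\mathcal T(y)$ is the $\mathbb F$-subalgebra of $M_X(\mathbb F)$ generated by $A_0,\dots,A_d,E_0^*(y),\dots,E_d^*(y)$. *)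

theory Defs
  imports Main
begin

text \<open>The finite set X is the (finite, nonempty) universe of the type 'x.
  Matrices in M_X(F) are functions 'x => 'x => 'a.\<close>

type_synonym ('x, 'a) xmat = "'x \<Rightarrow> 'x \<Rightarrow> 'a"

definition mat_add :: "('x, 'a::field) xmat \<Rightarrow> ('x, 'a) xmat \<Rightarrow> ('x, 'a) xmat" where
  "mat_add A B = (\<lambda>i j. A i j + B i j)"

definition mat_smult :: "'a::field \<Rightarrow> ('x, 'a) xmat \<Rightarrow> ('x, 'a) xmat" where
  "mat_smult c A = (\<lambda>i j. c * A i j)"

definition mat_mult :: "('x::finite, 'a::field) xmat \<Rightarrow> ('x, 'a) xmat \<Rightarrow> ('x, 'a) xmat" where
  "mat_mult A B = (\<lambda>i j. \<Sum>k\<in>UNIV. A i k * B k j)"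

definition mat_zero :: "('x, 'a::field) xmat" where
  "mat_zero = (\<lambda>i j. 0)"

definition mat_one :: "('x, 'a::field) xmat" where
  "mat_one = (\<lambda>i j. if i = j then 1 else 0)"

inductive_set gen_algebra :: "('x::finite, 'a::field) xmat set \<Rightarrow> ('x, 'a) xmat set"
  for G where
  gen: "A \<in> G \<Longrightarrow> A \<in> gen_algebra G"
| one: "mat_one \<in> gen_algebra G"
| add: "A \<in> gen_algebra G \<Longrightarrow> B \<in> gen_algebra G \<Longrightarrow> mat_add A B \<in> gen_algebra G"
| smult: "A \<in> gen_algebra G \<Longrightarrow> mat_smult c A \<in> gen_algebra G"
| mult: "A \<in> gen_algebra G \<Longrightarrow> B \<in> gen_algebra G \<Longrightarrow> mat_mult A B \<in> gen_algebra G"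

definition left_ideal :: "('x::finite, 'a::field) xmat set \<Rightarrow> ('x, 'a) xmat set \<Rightarrow> bool" where
  "left_ideal T L \<longleftrightarrow> L \<subseteq> T \<and> mat_zero \<in> L
     \<and> (\<forall>A\<in>L. \<forall>B\<in>L. mat_add A B \<in> L)
     \<and> (\<forall>c. \<forall>A\<in>L. mat_smult c A \<in> L)
     \<and> (\<forall>t\<in>T. \<forall>A\<in>L. mat_mult t A \<in> L)"

definition maximal_left_ideal :: "('x::finite, 'a::field) xmat set \<Rightarrow> ('x, 'a) xmat set \<Rightarrow> bool" where
  "maximal_left_ideal T L \<longleftrightarrow> left_ideal T L \<and> L \<noteq> T
     \<and> (\<forall>L'. left_ideal T L' \<and> L \<subseteq> L' \<longrightarrow> L' = L \<or> L' = T)"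

definition jacobson_radical :: "('x::finite, 'a::field) xmat set \<Rightarrow> ('x, 'a) xmat set" where
  "jacobson_radical T = T \<inter> \<Inter>{L. maximal_left_ideal T L}"

definition semisimple_alg :: "('x::finite, 'a::field) xmat set \<Rightarrow> bool" where
  "semisimple_alg T \<longleftrightarrow> jacobson_radical T = {mat_zero}"

definition is_scheme :: "nat \<Rightarrow> (nat \<Rightarrow> ('x::finite \<times> 'x) set) \<Rightarrow> bool" where
  "is_scheme d R \<longleftrightarrow>
     (\<forall>i\<le>d. R i \<noteq> {})
   \<and> (\<forall>i\<le>d. \<forall>j\<le>d. i \<noteq> j \<longrightarrow> R i \<inter> R j = {})
   \<and> (\<Union>i\<le>d. R i) = UNIV
   \<and> R 0 = {(b, b) | b. True}
   \<and> (\<forall>c\<le>d. \<exists>c'\<le>d. R c' = {(f, e). (e, f) \<in> R c})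
   \<and> (\<forall>i\<le>d. \<forall>j\<le>d. \<forall>k\<le>d. \<forall>m n m' n'. (m, n) \<in> R k \<longrightarrow> (m', n') \<in> R k \<longrightarrow>
        card {l. (m, l) \<in> R i \<and> (l, n) \<in> R j} = card {l. (m', l) \<in> R i \<and> (l, n') \<in> R j})"

definition converse_index :: "nat \<Rightarrow> (nat \<Rightarrow> ('x \<times> 'x) set) \<Rightarrow> nat \<Rightarrow> nat" where
  "converse_index d R c = (SOME c'. c' \<le> d \<and> R c' = {(f, e). (e, f) \<in> R c})"

definition intersection_number :: "(nat \<Rightarrow> ('x::finite \<times> 'x) set) \<Rightarrow> nat \<Rightarrow> nat \<Rightarrow> nat \<Rightarrow> nat" where
  "intersection_number R i j k =
     (let (m, n) = (SOME mn. mn \<in> R k) in card {l. (m, l) \<in> R i \<and> (l, n) \<in> R j})"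

definition valency :: "nat \<Rightarrow> (nat \<Rightarrow> ('x::finite \<times> 'x) set) \<Rightarrow> nat \<Rightarrow> nat" where
  "valency d R a = intersection_number R a (converse_index d R a) 0"

definition thin_scheme :: "nat \<Rightarrow> (nat \<Rightarrow> ('x::finite \<times> 'x) set) \<Rightarrow> bool" where
  "thin_scheme d R \<longleftrightarrow> (\<forall>a\<le>d. valency d R a = 1)"

definition quasi_thin_scheme :: "nat \<Rightarrow> (nat \<Rightarrow> ('x::finite \<times> 'x) set) \<Rightarrow> bool" where
  "quasi_thin_scheme d R \<longleftrightarrow> (\<forall>a\<le>d. valency d R a \<le> 2)"

definition adj_mat :: "(nat \<Rightarrow> ('x \<times> 'x) set) \<Rightarrow> nat \<Rightarrow> ('x, 'a::field) xmat" where
  "adj_mat R a = (\<lambda>i j. if (i, j) \<in> R a then 1 else 0)"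

definition dual_idem :: "(nat \<Rightarrow> ('x \<times> 'x) set) \<Rightarrow> 'x \<Rightarrow> nat \<Rightarrow> ('x, 'a::field) xmat" where
  "dual_idem R y a = (\<lambda>i j. if i = j \<and> (y, i) \<in> R a then 1 else 0)"

definition terwilliger_alg :: "nat \<Rightarrow> (nat \<Rightarrow> ('x::finite \<times> 'x) set) \<Rightarrow> 'x \<Rightarrow> ('x, 'a::field) xmat set" where
  "terwilliger_alg d R y =
     gen_algebra ((\<lambda>a. adj_mat R a) ` {..d} \<union> (\<lambda>a. dual_idem R y a) ` {..d})"

end

theory Submission
  imports Defs
begin


lemma if01_mult[simp]: "(if P then 1 else 0) * (a::'a::field) = (if P then a else 0)"
  "a * (if P then 1 else 0) = (if P then a else 0)" by simp_all

definition mv :: "('x::finite, 'a::field) xmat \<Rightarrow> ('x \<Rightarrow> 'a) \<Rightarrow> ('x \<Rightarrow> 'a)" where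
  "mv A v = (\<lambda>i. \<Sum>k\<in>UNIV. A i k * v k)"

lemma mat_mult_assoc: "mat_mult (mat_mult A B) C = mat_mult A (mat_mult B C)"
  unfolding mat_mult_def
  by (auto simp: sum_distrib_left sum_distrib_right mult.assoc intro!: ext sum.swap)

lemma mv_mult: "mv (mat_mult A B) v = mv A (mv B v)"
  unfolding mat_mult_def mv_def
  by (auto simp: sum_distrib_left sum_distrib_right mult.assoc intro!: ext sum.swap)

lemma mv_one[simp]: "mv mat_one v = v"
  unfolding mv_def mat_one_def by (simp add: fun_eq_iff)

lemma mv_zero_vec[simp]: "mv A (\<lambda>_. 0) = (\<lambda>_. 0)"
  unfolding mv_def by simp

lemma mv_add: "mv (mat_add A B) v = (\<lambda>i. mv A v i + mv B v i)"
  unfolding mv_def mat_add_def by (auto simp: distrib_right sum.distrib)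

lemma mv_smult: "mv (mat_smult c A) v = (\<lambda>i. c * mv A v i)"
  unfolding mv_def mat_smult_def by (auto simp: sum_distrib_left mult.assoc)

lemma mv_lin: "mv A (\<lambda>i. a * u i + b * w i) = (\<lambda>i. a * mv A u i + b * mv A w i)"
  unfolding mv_def by (auto simp: algebra_simps sum.distrib sum_distrib_left)

lemma mat_mult_one_right[simp]: "mat_mult A mat_one = A"
  unfolding mat_mult_def mat_one_def by (simp add: fun_eq_iff)

lemma mat_mult_one_left[simp]: "mat_mult mat_one A = A"
  unfolding mat_mult_def mat_one_def by (simp add: fun_eq_iff)

lemma mat_mult_add_left: "mat_mult (mat_add A B) C = mat_add (mat_mult A C) (mat_mult B C)"
  unfolding mat_mult_def mat_add_def by (auto simp: distrib_right sum.distrib)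

lemma mat_mult_add_right: "mat_mult C (mat_add A B) = mat_add (mat_mult C A) (mat_mult C B)"
  unfolding mat_mult_def mat_add_def by (auto simp: distrib_left sum.distrib)

lemma mat_mult_smult_left: "mat_mult (mat_smult c A) B = mat_smult c (mat_mult A B)"
  unfolding mat_mult_def mat_smult_def by (auto simp: sum_distrib_left mult.assoc)

lemma mat_mult_smult_right: "mat_mult A (mat_smult c B) = mat_smult c (mat_mult A B)"
  unfolding mat_mult_def mat_smult_def by (auto simp: sum_distrib_left algebra_simps)

lemma mat_mult_zero_right[simp]: "mat_mult A mat_zero = mat_zero"
  unfolding mat_mult_def mat_zero_def by auto

lemma mat_mult_zero_left[simp]: "mat_mult mat_zero A = mat_zero"
  unfolding mat_mult_def mat_zero_def by auto

lemma mat_zero_in: "mat_zero \<in> gen_algebra G"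
proof -
  have "mat_smult 0 mat_one \<in> gen_algebra G" by (intro gen_algebra.smult gen_algebra.one)
  moreover have "mat_smult 0 mat_one = (mat_zero :: ('a,'b) xmat)"
    unfolding mat_smult_def mat_zero_def by auto
  ultimately show ?thesis by simp
qed

lemma rad_kill:
  fixes m :: "'x::finite \<Rightarrow> 'a::field"
  assumes T: "T = gen_algebra G"
    and m0: "m \<noteq> (\<lambda>_. 0)"
    and good: "\<forall>t\<in>T. mv t m \<noteq> (\<lambda>_. 0) \<longrightarrow> (\<exists>s\<in>T. mv s (mv t m) = m)"
    and j: "j \<in> jacobson_radical T"
  shows "mv j m = (\<lambda>_. 0)"
proof -
  define L where "L = {t\<in>T. mv t m = (\<lambda>_. 0)}"
  have mz: "mv mat_zero m = (\<lambda>_. 0)" unfolding mv_def mat_zero_def by auto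
  have li: "left_ideal T L"
    unfolding left_ideal_def L_def
    using mz mat_zero_in[of G] T
    by (auto simp: mv_add mv_smult mv_mult gen_algebra.intros)
  have oneT: "mat_one \<in> T" using T by (auto simp: gen_algebra.intros)
  have LT: "L \<noteq> T"
  proof
    assume "L = T" then have "mat_one \<in> L" using oneT by simp
    then show False using m0 unfolding L_def by simp
  qed
  have mx: "maximal_left_ideal T L"
    unfolding maximal_left_ideal_def
  proof (intro conjI allI impI li LT)
    fix L' assume a: "left_ideal T L' \<and> L \<subseteq> L'"
    show "L' = L \<or> L' = T"
    proof (cases "L' = L")
      case False
      then obtain t' where t': "t' \<in> L'" "t' \<notin> L" using a by auto
      have t'T: "t' \<in> T" using t' a unfolding left_ideal_def by auto
      then have "mv t' m \<noteq> (\<lambda>_. 0)" using t' unfolding L_def by auto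
      then obtain s where s: "s \<in> T" "mv s (mv t' m) = m" using good t'T by auto
      have st: "mat_mult s t' \<in> L'" using a s t' unfolding left_ideal_def by auto
      define u where "u = mat_add mat_one (mat_smult (-1) (mat_mult s t'))"
      have uT: "u \<in> T" unfolding u_def using T s t'T by (auto simp: gen_algebra.intros)
      have "mv u m = (\<lambda>_. 0)" unfolding u_def
        by (simp add: mv_add mv_smult mv_mult s)
      then have "u \<in> L'" using uT a unfolding L_def by auto
      then have "mat_add u (mat_mult s t') \<in> L'" using st a unfolding left_ideal_def by auto
      moreover have "mat_add u (mat_mult s t') = mat_one"
        unfolding u_def mat_add_def mat_smult_def by auto
      ultimately have one: "mat_one \<in> L'" by simp
      have "T \<subseteq> L'"
      proof
        fix t assume "t \<in> T"
        moreover have "\<forall>t\<in>T. \<forall>A\<in>L'. mat_mult t A \<in> L'" using a unfolding left_ideal_def by simp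
        ultimately show "t \<in> L'" using one by (metis mat_mult_one_right)
      qed
      then show ?thesis using a unfolding left_ideal_def by auto
    qed simp
  qed
  then have "j \<in> L" using j unfolding jacobson_radical_def by auto
  then show ?thesis unfolding L_def by auto
qed

lemma nil_in_rad:
  fixes z :: "('x::finite, 'a::field) xmat"
  assumes T: "T = gen_algebra G"
    and zT: "z \<in> T"
    and nil: "\<forall>t\<in>T. mat_mult z (mat_mult t z) = mat_zero"
  shows "z \<in> jacobson_radical T"
  unfolding jacobson_radical_def
proof (intro IntI zT InterI, simp)
  fix L assume mL: "maximal_left_ideal T L"
  show "z \<in> L"
  proof (rule ccontr)
    assume zL: "z \<notin> L"
    have li: "left_ideal T L" and LT: "L \<noteq> T" and mx: "\<And>L'. left_ideal T L' \<Longrightarrow> L \<subseteq> L' \<Longrightarrow> L' = L \<or> L' = T"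
      using mL unfolding maximal_left_ideal_def by auto
    define L' where "L' = {mat_add l (mat_mult t z) | l t. l \<in> L \<and> t \<in> T}"
    have LsubT: "L \<subseteq> T" using li unfolding left_ideal_def by auto
    have zeroL: "mat_zero \<in> L" using li unfolding left_ideal_def by auto
    have mz1: "mat_mult mat_zero A = mat_zero" for A :: "('x,'a) xmat"
      unfolding mat_mult_def mat_zero_def by auto
    have az: "mat_add A mat_zero = A" "mat_add mat_zero A = A" for A :: "('x,'a) xmat"
      unfolding mat_add_def mat_zero_def by auto
    have L'I: "mat_add l (mat_mult t z) \<in> L'" if "l \<in> L" "t \<in> T" for l t
      unfolding L'_def using that by auto
    have li': "left_ideal T L'"
      unfolding left_ideal_def
    proof (intro conjI ballI allI)
      show "L' \<subseteq> T" unfolding L'_def using LsubT T zT by (auto simp: gen_algebra.intros subsetD)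
      show "mat_zero \<in> L'" unfolding L'_def using zeroL mat_zero_in[of G] T
        by (auto simp: mz1 az intro!: exI[of _ mat_zero])
    next
      fix A B assume "A \<in> L'" "B \<in> L'"
      then obtain l1 t1 l2 t2 where "A = mat_add l1 (mat_mult t1 z)" "l1 \<in> L" "t1 \<in> T"
        "B = mat_add l2 (mat_mult t2 z)" "l2 \<in> L" "t2 \<in> T" unfolding L'_def by auto
      moreover have "mat_add (mat_add l1 (mat_mult t1 z)) (mat_add l2 (mat_mult t2 z))
          = mat_add (mat_add l1 l2) (mat_mult (mat_add t1 t2) z)"
        unfolding mat_mult_add_left unfolding mat_add_def by (simp add: fun_eq_iff)
      moreover have "mat_add l1 l2 \<in> L" using li \<open>l1 \<in> L\<close> \<open>l2 \<in> L\<close> unfolding left_ideal_def by auto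
      moreover have "mat_add t1 t2 \<in> T" using T \<open>t1 \<in> T\<close> \<open>t2 \<in> T\<close> by (auto simp: gen_algebra.intros)
      ultimately show "mat_add A B \<in> L'" using L'I by metis
    next
      fix c A assume "A \<in> L'"
      then obtain l1 t1 where "A = mat_add l1 (mat_mult t1 z)" "l1 \<in> L" "t1 \<in> T"
        unfolding L'_def by auto
      moreover have "mat_smult c (mat_add l1 (mat_mult t1 z))
          = mat_add (mat_smult c l1) (mat_mult (mat_smult c t1) z)"
        unfolding mat_mult_smult_left unfolding mat_add_def mat_smult_def by (simp add: fun_eq_iff distrib_left)
      moreover have "mat_smult c l1 \<in> L" using li \<open>l1 \<in> L\<close> unfolding left_ideal_def by auto
      moreover have "mat_smult c t1 \<in> T" using T \<open>t1 \<in> T\<close> by (auto simp: gen_algebra.intros)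
      ultimately show "mat_smult c A \<in> L'" using L'I by metis
    next
      fix s A assume s: "s \<in> T" and "A \<in> L'"
      then obtain l1 t1 where "A = mat_add l1 (mat_mult t1 z)" "l1 \<in> L" "t1 \<in> T"
        unfolding L'_def by auto
      moreover have "mat_mult s (mat_add l1 (mat_mult t1 z))
          = mat_add (mat_mult s l1) (mat_mult (mat_mult s t1) z)"
        by (simp add: mat_mult_add_right mat_mult_assoc)
      moreover have "mat_mult s l1 \<in> L" using li \<open>l1 \<in> L\<close> s unfolding left_ideal_def by auto
      moreover have "mat_mult s t1 \<in> T" using T \<open>t1 \<in> T\<close> s by (auto simp: gen_algebra.intros)
      ultimately show "mat_mult s A \<in> L'" using L'I by metis
    qed
    have "L \<subseteq> L'"
    proof
      fix l assume "l \<in> L"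
      moreover have "mat_add l (mat_mult mat_zero z) = l" by (simp add: mz1 az)
      moreover have "mat_zero \<in> T" using mat_zero_in[of G] T by simp
      ultimately show "l \<in> L'" using L'I by metis
    qed
    moreover have "z \<in> L'"
    proof -
      have "z = mat_add mat_zero (mat_mult mat_one z)" by (simp add: az)
      moreover have "mat_one \<in> T" using T by (auto simp: gen_algebra.intros)
      ultimately show ?thesis using zeroL L'I by metis
    qed
    ultimately have "L' = T" using mx[OF li'] zL by auto
    then have "mat_one \<in> L'" using T by (auto simp: gen_algebra.intros)
    then obtain l t where lt: "mat_one = mat_add l (mat_mult t z)" "l \<in> L" "t \<in> T"
      unfolding L'_def by auto
    define n where "n = mat_mult t z"
    have nn: "mat_mult n n = mat_zero" unfolding n_def
      using nil lt(3) by (simp add: mat_mult_assoc)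
    have l_eq: "l = mat_add mat_one (mat_smult (-1) n)"
      
    proof -
      have "\<forall>i j. mat_one i j = l i j + n i j" using lt(1) unfolding n_def mat_add_def by metis
      then show ?thesis unfolding mat_add_def mat_smult_def by (simp add: fun_eq_iff algebra_simps)
    qed
    have "mat_mult (mat_add mat_one n) l = mat_one"
      unfolding l_eq
      unfolding mat_mult_add_left mat_mult_add_right mat_mult_smult_right nn
      by (simp add: mat_add_def mat_smult_def mat_zero_def fun_eq_iff)
    moreover have "mat_add mat_one n \<in> T" unfolding n_def using T lt zT by (auto simp: gen_algebra.intros)
    ultimately have oneL: "mat_one \<in> L" using li lt unfolding left_ideal_def by metis
    have "T \<subseteq> L"
    proof
      fix s assume "s \<in> T"
      then have "mat_mult s mat_one \<in> L" using oneL li unfolding left_ideal_def by blast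
      then show "s \<in> L" by simp
    qed
    then show False using LT LsubT by auto
  qed
qed




locale qts =
  fixes d :: nat and R :: "nat \<Rightarrow> ('x::finite \<times> 'x) set" and x :: 'x
  assumes sch: "is_scheme d R" and qt: "quasi_thin_scheme d R"
begin

lemma S1: "\<forall>i\<le>d. R i \<noteq> {}" using sch[unfolded is_scheme_def] by (rule conjunct1)
lemma S2: "\<forall>i\<le>d. \<forall>j\<le>d. i \<noteq> j \<longrightarrow> R i \<inter> R j = {}"
  using sch[unfolded is_scheme_def, THEN conjunct2] by (rule conjunct1)
lemma S3: "(\<Union>i\<le>d. R i) = UNIV"
  using sch[unfolded is_scheme_def, THEN conjunct2, THEN conjunct2] by (rule conjunct1)
lemma S4: "R 0 = {(b, b) | b. True}"
  using sch[unfolded is_scheme_def, THEN conjunct2, THEN conjunct2, THEN conjunct2] by (rule conjunct1)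
lemma S5: "\<forall>c\<le>d. \<exists>c'\<le>d. R c' = {(f, e). (e, f) \<in> R c}"
  using sch[unfolded is_scheme_def, THEN conjunct2, THEN conjunct2, THEN conjunct2, THEN conjunct2] by (rule conjunct1)
lemma S6: "\<forall>i\<le>d. \<forall>j\<le>d. \<forall>k\<le>d. \<forall>m n m' n'. (m, n) \<in> R k \<longrightarrow> (m', n') \<in> R k \<longrightarrow>
        card {l. (m, l) \<in> R i \<and> (l, n) \<in> R j} = card {l. (m', l) \<in> R i \<and> (l, n') \<in> R j}"
  using sch[unfolded is_scheme_def, THEN conjunct2, THEN conjunct2, THEN conjunct2, THEN conjunct2] by (rule conjunct2)

lemma ne: "i \<le> d \<Longrightarrow> R i \<noteq> {}" using S1 by blast
lemma disj: "i \<le> d \<Longrightarrow> j \<le> d \<Longrightarrow> p \<in> R i \<Longrightarrow> p \<in> R j \<Longrightarrow> i = j"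
proof (rule ccontr)
  assume "i \<le> d" "j \<le> d" "p \<in> R i" "p \<in> R j" "i \<noteq> j"
  then have "R i \<inter> R j = {}" using S2 by blast
  then show False using \<open>p \<in> R i\<close> \<open>p \<in> R j\<close> by blast
qed
lemma cover: "\<exists>i\<le>d. p \<in> R i"
proof -
  have "p \<in> (\<Union>i\<le>d. R i)" using S3 by simp
  then show ?thesis by (auto simp: atMost_iff)
qed
lemma R0: "(a, b) \<in> R 0 \<longleftrightarrow> a = b" using S4 by auto
lemma reg: "i \<le> d \<Longrightarrow> j \<le> d \<Longrightarrow> k \<le> d \<Longrightarrow> (m, n) \<in> R k \<Longrightarrow> (m', n') \<in> R k \<Longrightarrow>
   card {l. (m, l) \<in> R i \<and> (l, n) \<in> R j} = card {l. (m', l) \<in> R i \<and> (l, n') \<in> R j}"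
  by (rule S6[rule_format])

definition cv :: "nat \<Rightarrow> nat" where "cv c = converse_index d R c"

lemma cv: assumes "c \<le> d" shows "cv c \<le> d" "\<And>a b. (a, b) \<in> R (cv c) \<longleftrightarrow> (b, a) \<in> R c"
proof -
  have "\<exists>c'\<le>d. R c' = {(f, e). (e, f) \<in> R c}" using S5 assms by simp
  then have "cv c \<le> d \<and> R (cv c) = {(f, e). (e, f) \<in> R c}"
    unfolding cv_def converse_index_def by (rule someI_ex)
  then show "cv c \<le> d" "\<And>a b. (a, b) \<in> R (cv c) \<longleftrightarrow> (b, a) \<in> R c" by auto
qed

definition cl :: "'x \<Rightarrow> nat" where "cl z = (SOME b. b \<le> d \<and> (x, z) \<in> R b)"

lemma cl: "cl z \<le> d" "(x, z) \<in> R (cl z)"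
proof -
  have "\<exists>b. b \<le> d \<and> (x, z) \<in> R b" using cover by blast
  then have "cl z \<le> d \<and> (x, z) \<in> R (cl z)" unfolding cl_def by (rule someI_ex)
  then show "cl z \<le> d" "(x, z) \<in> R (cl z)" by auto
qed

lemma cl_unique: "b \<le> d \<Longrightarrow> (x, z) \<in> R b \<Longrightarrow> b = cl z"
  using disj cl by blast

lemma val_card: assumes "a \<le> d" shows "card {l. (y, l) \<in> R a} = valency d R a"
proof -
  define mn where "mn = (SOME mn. mn \<in> R 0)"
  have "mn \<in> R 0" unfolding mn_def using R0[of x x] by (metis someI_ex)
  then obtain m where m: "mn = (m, m)" using R0 by (cases mn) auto
  have "valency d R a = card {l. (m, l) \<in> R a \<and> (l, m) \<in> R (cv a)}"
    unfolding valency_def intersection_number_def cv_def[symmetric] mn_def[symmetric] m by simp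
  also have "\<dots> = card {l. (y, l) \<in> R a \<and> (l, y) \<in> R (cv a)}"
    by (rule reg[of a "cv a" 0 m m y y]) (use assms cv R0 in auto)
  also have "{l. (y, l) \<in> R a \<and> (l, y) \<in> R (cv a)} = {l. (y, l) \<in> R a}"
    using cv(2)[OF assms] by auto
  finally show ?thesis by simp
qed

definition C :: "'x \<Rightarrow> 'x set" where "C z = {w. (x, w) \<in> R (cl z)}"

lemma C_mem: "w \<in> C z \<longleftrightarrow> cl w = cl z"
proof
  assume "w \<in> C z"
  then have "(x, w) \<in> R (cl z)" unfolding C_def by simp
  then show "cl w = cl z" using cl_unique[of "cl z" w] cl(1)[of z] by simp
next
  assume "cl w = cl z"
  then show "w \<in> C z" unfolding C_def using cl(2)[of w] by simp
qed

lemma C_self: "z \<in> C z" unfolding C_mem by simp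

lemma C_card: "card (C z) \<le> 2" "card (C z) = valency d R (cl z)"
proof -
  show "card (C z) = valency d R (cl z)" unfolding C_def using val_card[OF cl(1)] by simp
  then show "card (C z) \<le> 2" using qt cl(1)[of z] unfolding quasi_thin_scheme_def by simp
qed

definition sig :: "'x \<Rightarrow> 'x" where
  "sig z = (if \<exists>w. w \<in> C z \<and> w \<noteq> z then SOME w. w \<in> C z \<and> w \<noteq> z else z)"

lemma sig_other: assumes "\<exists>w. w \<in> C z \<and> w \<noteq> z" shows "sig z \<in> C z \<and> sig z \<noteq> z"
proof -
  have "sig z = (SOME w. w \<in> C z \<and> w \<noteq> z)" unfolding sig_def using assms by simp
  then show ?thesis using someI_ex[OF assms] by simp
qed

lemma sig_C: "sig z \<in> C z"
  using sig_other[of z] C_self[of z] unfolding sig_def by (cases "\<exists>w. w \<in> C z \<and> w \<noteq> z") auto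

lemma cl_sig[simp]: "cl (sig z) = cl z" using sig_C C_mem by blast

lemma C_eq: "C z = {z, sig z}"
proof (cases "\<exists>w. w \<in> C z \<and> w \<noteq> z")
  case True
  then have s: "sig z \<in> C z" "sig z \<noteq> z" using sig_other by auto
  have sub: "{z, sig z} \<subseteq> C z" using s C_self by auto
  have "card {z, sig z} = 2" using s by auto
  then have "card (C z) \<ge> 2" using card_mono[OF finite sub] by simp
  then have "card (C z) = card {z, sig z}" using C_card(1)[of z] \<open>card {z, sig z} = 2\<close> by linarith
  then show ?thesis using card_subset_eq[OF finite sub] by simp
next
  case False
  then show ?thesis using C_self unfolding sig_def by auto
qed

lemma C_sig: "C (sig z) = C z" unfolding C_def by simp

lemma sig_sig[simp]: "sig (sig z) = z"
proof (cases "sig z = z")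
  case False
  have "sig (sig z) \<in> C z" using sig_C[of "sig z"] C_sig by simp
  moreover have "sig (sig z) \<noteq> sig z"
  proof
    assume "sig (sig z) = sig z"
    then have "C z = {sig z}" using C_eq[of "sig z"] C_sig by simp
    then show False using C_self[of z] False by auto
  qed
  ultimately show ?thesis using C_eq by auto
qed simp

lemma sig_inj: "sig a = sig b \<longleftrightarrow> a = b" by (metis sig_sig)

lemma bij_sig: "bij sig" by (metis bij_betw_byWitness sig_sig top_greatest)

lemma cnt_const: assumes "b \<le> d" "cl y = cl y'"
  shows "card {l. l \<in> C z \<and> (l, y) \<in> R b} = card {l. l \<in> C z \<and> (l, y') \<in> R b}"
proof -
  have "card {l. (x, l) \<in> R (cl z) \<and> (l, y) \<in> R b} = card {l. (x, l) \<in> R (cl z) \<and> (l, y') \<in> R b}"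
    by (rule reg[of "cl z" b "cl y" x y x y']) (use assms cl in metis)+
  then show ?thesis unfolding C_def by simp
qed

lemma card2: "a \<noteq> b \<Longrightarrow> card {l. l \<in> {a, b} \<and> P l} = (if P a then 1 else 0) + (if P b then 1 else 0)"
proof -
  assume "a \<noteq> b"
  have "{l. l \<in> {a, b} \<and> P l} = (if P a then {a} else {}) \<union> (if P b then {b} else {})" by auto
  then show ?thesis using \<open>a \<noteq> b\<close> by auto
qed

lemma card_eq1[simp]: "card {l. l = a \<and> P l} = (if P a then 1 else 0)"
proof -
  have "{l. l = a \<and> P l} = (if P a then {a} else {})" by auto
  then show ?thesis by auto
qed

lemma card1: "card {l. l \<in> {a, a} \<and> P l} = (if P a then 1 else 0)"
proof -
  have "{l. l \<in> {a, a} \<and> P l} = (if P a then {a} else {})" by auto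
  then show ?thesis by auto
qed

lemma aut1: assumes b: "b \<le> d" and zy: "(z, y) \<in> R b" shows "(sig z, sig y) \<in> R b"
proof -
  define P where "P l w \<longleftrightarrow> (l, w) \<in> R b" for l w
  have col: "card {l. l \<in> {z, sig z} \<and> P l y} = card {l. l \<in> {z, sig z} \<and> P l (sig y)}"
    using cnt_const[OF b, of y "sig y" z] C_eq unfolding P_def by simp
  have "card {l. l \<in> C y \<and> (l, z) \<in> R (cv b)} = card {l. l \<in> C y \<and> (l, sig z) \<in> R (cv b)}"
    using cnt_const[OF cv(1)[OF b], of z "sig z" y] by simp
  then have row: "card {l. l \<in> {y, sig y} \<and> P z l} = card {l. l \<in> {y, sig y} \<and> P (sig z) l}"
    using C_eq cv(2)[OF b] unfolding P_def by simp
  have pzy: "P z y" using zy unfolding P_def by simp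
  show ?thesis
  proof (cases "sig z = z")
    case sz: True
    show ?thesis
    proof (cases "sig y = y")
      case True then show ?thesis using sz zy by simp
    next
      case False
      then show ?thesis using col pzy sz unfolding card2[OF False[symmetric]] P_def
        by (simp add: card1 split: if_splits)
    qed
  next
    case sz: False
    show ?thesis
    proof (cases "sig y = y")
      case True then show ?thesis using row pzy sz unfolding card2[OF sz[symmetric]] P_def
        by (simp add: card1 split: if_splits)
    next
      case sy: False
      show ?thesis using row col pzy unfolding card2[OF sz[symmetric]] card2[OF sy[symmetric]] P_def
        by (simp split: if_splits)
    qed
  qed
qed

lemma aut: "b \<le> d \<Longrightarrow> (sig z, sig y) \<in> R b \<longleftrightarrow> (z, y) \<in> R b"
  using aut1[of b z y] aut1[of b "sig z" "sig y"] by auto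

end




definition trn :: "('x, 'a) xmat \<Rightarrow> ('x, 'a) xmat" where "trn A = (\<lambda>i j. A j i)"

context qts begin

abbreviation TT :: "('x, 'a::field) xmat set" where "TT \<equiv> terwilliger_alg d R x"

lemma adj_in: "b \<le> d \<Longrightarrow> adj_mat R b \<in> TT"
  unfolding terwilliger_alg_def by (rule gen_algebra.gen) auto
lemma dual_in: "c \<le> d \<Longrightarrow> dual_idem R x c \<in> TT"
  unfolding terwilliger_alg_def by (rule gen_algebra.gen) auto
lemma T_mult: "A \<in> TT \<Longrightarrow> B \<in> TT \<Longrightarrow> mat_mult A B \<in> TT"
  unfolding terwilliger_alg_def by (rule gen_algebra.mult)
lemma T_smult: "A \<in> TT \<Longrightarrow> mat_smult c A \<in> TT"
  unfolding terwilliger_alg_def by (rule gen_algebra.smult)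

lemma cls_sig: "c \<le> d \<Longrightarrow> (x, sig z) \<in> R c \<longleftrightarrow> (x, z) \<in> R c"
  using cl_unique[of c z] cl_unique[of c "sig z"] cl cl_sig by metis

lemma sum_sig: "(\<Sum>k\<in>UNIV. g k) = (\<Sum>k\<in>UNIV. g (sig k))"
  using sum.reindex_bij_betw[OF bij_sig[unfolded bij_betw_def[symmetric]], of g] bij_sig
  by (simp add: sum.reindex_bij_betw)

definition commutes :: "('x, 'a::field) xmat \<Rightarrow> bool" where
  "commutes t \<longleftrightarrow> (\<forall>z y. t (sig z) (sig y) = t z y)"

lemma comm_T: assumes "(t :: ('x, 'a::field) xmat) \<in> TT" shows "commutes t"
  using assms unfolding terwilliger_alg_def
proof (induction rule: gen_algebra.induct)
  case (gen A)
  then show ?case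
  proof
    assume "A \<in> (\<lambda>a. adj_mat R a) ` {..d}"
    then obtain b where "b \<le> d" "A = adj_mat R b" by auto
    then show ?thesis unfolding commutes_def adj_mat_def using aut by simp
  next
    assume "A \<in> (\<lambda>a. dual_idem R x a) ` {..d}"
    then obtain c where "c \<le> d" "A = dual_idem R x c" by auto
    then show ?thesis unfolding commutes_def dual_idem_def using cls_sig sig_inj by simp
  qed
next
  case one
  then show ?case unfolding commutes_def mat_one_def using sig_inj by simp
next
  case (add A B)
  then show ?case unfolding commutes_def mat_add_def by simp
next
  case (smult A c)
  then show ?case unfolding commutes_def mat_smult_def by simp
next
  case (mult A B)
  show ?case unfolding commutes_def mat_mult_def
  proof (intro allI)
    fix z y
    have "(\<Sum>k\<in>UNIV. A (sig z) k * B k (sig y)) = (\<Sum>k\<in>UNIV. A (sig z) (sig k) * B (sig k) (sig y))"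
      by (rule sum_sig)
    also have "\<dots> = (\<Sum>k\<in>UNIV. A z k * B k y)"
      using mult.IH unfolding commutes_def by simp
    finally show "(\<Sum>k\<in>UNIV. A (sig z) k * B k (sig y)) = (\<Sum>k\<in>UNIV. A z k * B k y)" .
  qed
qed

lemma trn_T: assumes "(t :: ('x, 'a::field) xmat) \<in> TT" shows "trn t \<in> TT"
  using assms unfolding terwilliger_alg_def
proof (induction rule: gen_algebra.induct)
  case (gen A)
  then show ?case
  proof
    assume "A \<in> (\<lambda>a. adj_mat R a) ` {..d}"
    then obtain b where b: "b \<le> d" "A = adj_mat R b" by auto
    then have "trn A = adj_mat R (cv b)" unfolding trn_def adj_mat_def using cv(2)[OF b(1)] by simp
    then show ?thesis using cv(1)[OF b(1)] by (auto intro!: gen_algebra.gen)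
  next
    assume "A \<in> (\<lambda>a. dual_idem R x a) ` {..d}"
    then obtain c where c: "c \<le> d" "A = dual_idem R x c" by auto
    then have "trn A = A" unfolding trn_def dual_idem_def by (auto simp: fun_eq_iff)
    then show ?thesis using gen by (auto intro!: gen_algebra.gen)
  qed
next
  case one
  have "trn mat_one = (mat_one :: ('x, 'a) xmat)" unfolding trn_def mat_one_def by (auto simp: fun_eq_iff)
  then show ?case by (simp add: gen_algebra.one)
next
  case (add A B)
  have "trn (mat_add A B) = mat_add (trn A) (trn B)" unfolding trn_def mat_add_def by simp
  then show ?case using add.IH by (simp add: gen_algebra.add)
next
  case (smult A c)
  have "trn (mat_smult c A) = mat_smult c (trn A)" unfolding trn_def mat_smult_def by simp
  then show ?case using smult.IH by (simp add: gen_algebra.smult)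
next
  case (mult A B)
  have "trn (mat_mult A B) = mat_mult (trn B) (trn A)" unfolding trn_def mat_mult_def
    by (simp add: mult.commute)
  then show ?case using mult.IH by (simp add: gen_algebra.mult)
qed

lemma mv_dual: "mv (dual_idem R x c) v = (\<lambda>i. if (x, i) \<in> R c then v i else (0::'a::field))"
  unfolding mv_def dual_idem_def
proof (rule ext)
  fix i
  show "(\<Sum>k\<in>UNIV. (if i = k \<and> (x, i) \<in> R c then 1 else 0) * v k) = (if (x, i) \<in> R c then v i else 0)"
    by (cases "(x, i) \<in> R c") simp_all
qed

lemma mv_adj: "mv (adj_mat R b) v = (\<lambda>i. \<Sum>k\<in>{k. (i, k) \<in> R b}. (v k :: 'a::field))"
  unfolding mv_def adj_mat_def
  by (auto simp: fun_eq_iff sum.inter_filter[symmetric])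

lemma mv_sig: assumes "commutes t" "\<And>k. m (sig k) = e * m k"
  shows "mv t m (sig z) = e * mv t m z"
proof -
  have "mv t m (sig z) = (\<Sum>k\<in>UNIV. t (sig z) (sig k) * m (sig k))"
    unfolding mv_def by (rule sum_sig)
  also have "\<dots> = (\<Sum>k\<in>UNIV. e * (t z k * m k))"
    using assms unfolding commutes_def by (simp add: algebra_simps)
  also have "\<dots> = e * mv t m z" unfolding mv_def by (simp add: sum_distrib_left)
  finally show ?thesis .
qed

lemma cl_x: "cl x = 0"
  using cl_unique[of 0 x] R0 by simp

lemma C_x: "C x = {x}" unfolding C_def cl_x using R0 by auto

lemma sig_x: "sig x = x" using sig_C[of x] C_x by auto

lemma sum_C: "(\<Sum>k\<in>C z. (g k :: 'a::field)) = (if sig z = z then g z else g z + g (sig z))"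
  unfolding C_eq by auto

end



context qts begin

lemma good1:
  fixes y :: 'x
  assumes H: "\<forall>z. sig z \<noteq> z \<longrightarrow> (2::'a::field) \<noteq> 0"
  defines "m1 \<equiv> (\<lambda>i. if i \<in> C y then (1::'a) else 0)"
  shows "\<forall>t\<in>TT. mv t m1 \<noteq> (\<lambda>_. 0) \<longrightarrow> (\<exists>s\<in>TT. mv s (mv t m1) = m1)"
proof (intro ballI impI)
  fix t :: "('x, 'a) xmat" assume t: "t \<in> TT" and nz: "mv t m1 \<noteq> (\<lambda>_. 0)"
  define w where "w = mv t m1"
  obtain z where wz: "w z \<noteq> 0" using nz unfolding w_def by auto
  have m1s: "m1 (sig k) = 1 * m1 k" for k unfolding m1_def using C_mem cl_sig by simp
  have wsig: "w (sig k) = w k" for k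
    using mv_sig[OF comm_T[OF t], of m1 1, OF m1s] unfolding w_def by simp
  define c where "c = cl z"
  define \<mu> where "\<mu> = (\<Sum>k\<in>C z. w k)"
  have mu0: "\<mu> \<noteq> 0"
  proof (cases "sig z = z")
    case True then show ?thesis unfolding \<mu>_def sum_C using wz by simp
  next
    case False
    then have "\<mu> = 2 * w z" unfolding \<mu>_def sum_C wsig by simp
    moreover have "(2::'a) \<noteq> 0" using H False by blast
    ultimately show ?thesis using wz by simp
  qed
  define s1 where "s1 = (mat_mult (dual_idem R x 0) (mat_mult (adj_mat R c) (dual_idem R x c)) :: ('x, 'a) xmat)"
  have s1T: "s1 \<in> TT" unfolding s1_def using cl(1)[of z] c_def
    by (intro T_mult dual_in adj_in) auto
  have mvs1: "mv s1 w = (\<lambda>i. if i = x then \<mu> else 0)"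
  proof (rule ext)
    fix i
    have "mv s1 w i = (if x = i then (\<Sum>k\<in>{k. (i, k) \<in> R c}. if (x, k) \<in> R c then w k else 0) else 0)"
      unfolding s1_def mv_mult mv_dual mv_adj R0 by simp
    also have "\<dots> = (if i = x then \<mu> else 0)"
    proof (cases "i = x")
      case True
      have "(\<Sum>k\<in>{k. (x, k) \<in> R c}. if (x, k) \<in> R c then w k else 0) = (\<Sum>k\<in>{k. (x, k) \<in> R c}. w k)"
        by (rule sum.cong) auto
      then show ?thesis using True unfolding \<mu>_def C_def c_def by simp
    qed simp
    finally show "mv s1 w i = (if i = x then \<mu> else 0)" .
  qed
  define a where "a = cl y"
  define s2 where "s2 = (adj_mat R (cv a) :: ('x, 'a) xmat)"
  have s2T: "s2 \<in> TT" unfolding s2_def a_def using cv(1)[OF cl(1)] by (intro adj_in) auto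
  have mvs2: "mv s2 (\<lambda>i. if i = x then \<mu> else 0) = (\<lambda>i. \<mu> * m1 i)"
  proof (rule ext)
    fix i
    have "mv s2 (\<lambda>i. if i = x then \<mu> else 0) i = (if (i, x) \<in> R (cv a) then \<mu> else 0)"
      unfolding s2_def mv_adj by (simp add: sum.delta)
    also have "\<dots> = \<mu> * m1 i" unfolding m1_def C_def a_def using cv(2)[OF cl(1)[of y]] by simp
    finally show "mv s2 (\<lambda>i. if i = x then \<mu> else 0) i = \<mu> * m1 i" .
  qed
  define s where "s = mat_smult (1 / \<mu>) (mat_mult s2 s1)"
  have "s \<in> TT" unfolding s_def using s1T s2T by (intro T_smult T_mult)
  moreover have "mv s w = m1"
    unfolding s_def mv_smult mv_mult mvs1 mvs2 using mu0 by (simp add: fun_eq_iff)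
  ultimately show "\<exists>s\<in>TT. mv s (mv t m1) = m1" unfolding w_def by blast
qed

lemma good2:
  fixes y :: 'x
  assumes H2: "(2::'a::field) \<noteq> 0" and sy: "sig y \<noteq> y"
  defines "m2 \<equiv> (\<lambda>i. if i = y then (1::'a) else if i = sig y then -1 else 0)"
  shows "\<forall>t\<in>TT. mv t m2 \<noteq> (\<lambda>_. 0) \<longrightarrow> (\<exists>s\<in>TT. mv s (mv t m2) = m2)"
proof (intro ballI impI)
  fix t :: "('x, 'a) xmat" assume t: "t \<in> TT" and nz: "mv t m2 \<noteq> (\<lambda>_. 0)"
  define w where "w = mv t m2"
  obtain z where wz: "w z \<noteq> 0" using nz unfolding w_def by auto
  have ct: "commutes t" using comm_T[OF t] .
  then have tc: "t (sig a) (sig b) = t a b" for a b unfolding commutes_def by simp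
  have m2s: "m2 (sig k) = -1 * m2 k" for k
    unfolding m2_def using sy sig_inj[of k y] sig_inj[of k "sig y"] by auto
  have wsig: "w (sig k) = - w k" for k
    using mv_sig[OF ct, of m2 "-1", OF m2s] unfolding w_def by simp
  have sz: "sig z \<noteq> z"
  proof
    assume "sig z = z"
    then have "w z = - w z" using wsig[of z] by simp
    then have "2 * w z = 0" by (simp add: algebra_simps)
    then show False using H2 wz by simp
  qed
  have wz_eq: "w z = t z y - t (sig z) y"
  proof -
    have "\<And>k. t z k * m2 k = (if k = y then t z y else 0) + (if k = sig y then - t z (sig y) else 0)"
      unfolding m2_def using sy by auto
    then have "w z = (\<Sum>k\<in>UNIV. (if k = y then t z y else 0) + (if k = sig y then - t z (sig y) else 0))"
      unfolding w_def mv_def by simp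
    also have "\<dots> = t z y - t z (sig y)" by (simp add: sum.distrib)
    also have "t z (sig y) = t (sig z) y" using tc[of z "sig y"] by simp
    finally show ?thesis .
  qed
  define c where "c = cl z"
  define a where "a = cl y"
  define s where "s = (mat_mult (dual_idem R x a) (mat_mult (trn t) (dual_idem R x c)) :: ('x, 'a) xmat)"
  have sT: "s \<in> TT" unfolding s_def a_def c_def
    by (intro T_mult dual_in trn_T t cl(1))
  have mvs: "mv s w = (\<lambda>i. (w z * w z) * m2 i)"
  proof (rule ext)
    fix i
    have inner: "(\<Sum>k\<in>UNIV. t k i * (if (x, k) \<in> R c then w k else 0)) = w z * (t z i - t (sig z) i)"
    proof -
      have "(\<Sum>k\<in>UNIV. t k i * (if (x, k) \<in> R c then w k else 0)) = (\<Sum>k\<in>{k. (x, k) \<in> R c}. t k i * w k)"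
        by (simp add: sum.inter_filter[symmetric] if_distrib cong: if_cong)
      also have "\<dots> = (\<Sum>k\<in>C z. t k i * w k)" unfolding C_def c_def by simp
      also have "\<dots> = t z i * w z + t (sig z) i * w (sig z)" unfolding sum_C using sz by simp
      also have "\<dots> = w z * (t z i - t (sig z) i)" using wsig[of z] by (simp add: algebra_simps)
      finally show ?thesis .
    qed
    have "mv s w i = (if (x, i) \<in> R a then (\<Sum>k\<in>UNIV. t k i * (if (x, k) \<in> R c then w k else 0)) else 0)"
      unfolding s_def mv_mult mv_dual by (simp add: mv_def trn_def)
    also have "\<dots> = (if i \<in> C y then w z * (t z i - t (sig z) i) else 0)"
      unfolding inner C_def a_def by simp
    also have "\<dots> = (w z * w z) * m2 i"
    proof (cases "i = y")
      case True then show ?thesis using C_self[of y] wz_eq unfolding m2_def by simp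
    next
      case F1: False
      show ?thesis
      proof (cases "i = sig y")
        case True
        have "t z (sig y) - t (sig z) (sig y) = - w z"
          using wz_eq tc[of z "sig y"] tc[of z y] by simp
        then show ?thesis using True sig_C[of y] F1 unfolding m2_def by simp
      next
        case False
        then show ?thesis using F1 unfolding m2_def C_eq by simp
      qed
    qed
    finally show "mv s w i = (w z * w z) * m2 i" .
  qed
  define s' where "s' = mat_smult (1 / (w z * w z)) s"
  have "s' \<in> TT" unfolding s'_def using sT by (intro T_smult)
  moreover have "mv s' w = m2"
    unfolding s'_def mv_smult mvs using wz by (simp add: fun_eq_iff)
  ultimately show "\<exists>s\<in>TT. mv s (mv t m2) = m2" unfolding w_def by blast
qed

end



context qts begin

lemma ss_dir:
  assumes H: "\<forall>z. sig z \<noteq> z \<longrightarrow> (2::'a::field) \<noteq> 0"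
  shows "semisimple_alg (TT :: ('x, 'a) xmat set)"
  unfolding semisimple_alg_def
proof
  show "jacobson_radical (TT :: ('x, 'a) xmat set) \<subseteq> {mat_zero}"
  proof
    fix j :: "('x, 'a) xmat" assume j: "j \<in> jacobson_radical TT"
    have col: "j i y = 0" for i y
    proof -
      define m1 where "m1 = (\<lambda>i. if i \<in> C y then (1::'a) else 0)"
      define m2 where "m2 = (\<lambda>i. if i = y then (1::'a) else if i = sig y then -1 else 0)"
      define ey where "ey = (\<lambda>k. if k = y then (1::'a) else 0)"
      have m10: "m1 \<noteq> (\<lambda>_. 0)" unfolding m1_def using C_self[of y] by (auto simp: fun_eq_iff)
      have k1: "mv j m1 = (\<lambda>_. 0)"
        using rad_kill[OF terwilliger_alg_def m10 good1[OF H, of y, folded m1_def] j] .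
      have mey: "mv j ey i = j i y" unfolding mv_def ey_def by simp
      show ?thesis
      proof (cases "sig y = y")
        case True
        then have "ey = m1" unfolding ey_def m1_def C_eq by auto
        then show ?thesis using mey k1 by simp
      next
        case False
        have H2: "(2::'a) \<noteq> 0" using H False by blast
        have m20: "m2 \<noteq> (\<lambda>_. 0)" unfolding m2_def by (auto simp: fun_eq_iff)
        have k2: "mv j m2 = (\<lambda>_. 0)"
          using rad_kill[OF terwilliger_alg_def m20 good2[OF H2 False, folded m2_def] j] .
        have "ey = (\<lambda>k. (1/2) * m1 k + (1/2) * m2 k)"
        proof (rule ext)
          fix k
          show "ey k = (1/2) * m1 k + (1/2) * m2 k"
            unfolding ey_def m1_def m2_def C_eq using False H2
            by (auto simp: field_simps)
        qed
        then have "mv j ey = (\<lambda>i. (1/2) * mv j m1 i + (1/2) * mv j m2 i)" by (simp only: mv_lin)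
        then have "mv j ey = (\<lambda>_. 0)" using k1 k2 by simp
        then show ?thesis using mey by (metis)
      qed
    qed
    then have "j = mat_zero" unfolding mat_zero_def by (auto simp: fun_eq_iff)
    then show "j \<in> {mat_zero}" by simp
  qed
next
  show "{mat_zero} \<subseteq> jacobson_radical (TT :: ('x, 'a) xmat set)"
    unfolding jacobson_radical_def
    using mat_zero_in unfolding terwilliger_alg_def maximal_left_ideal_def left_ideal_def by auto
qed

lemma mult_dual_left: "mat_mult (dual_idem R x c) M = (\<lambda>i j. if (x, i) \<in> R c then M i j else (0::'a::field))"
  unfolding mat_mult_def dual_idem_def
proof (intro ext)
  fix i j
  show "(\<Sum>k\<in>UNIV. (if i = k \<and> (x, i) \<in> R c then 1 else 0) * M k j) = (if (x, i) \<in> R c then M i j else 0)"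
    by (cases "(x, i) \<in> R c") simp_all
qed

lemma mult_dual_right: "mat_mult M (dual_idem R x c) = (\<lambda>i j. if (x, j) \<in> R c then M i j else (0::'a::field))"
  unfolding mat_mult_def dual_idem_def
proof (intro ext)
  fix i j
  have "(\<lambda>k. M i k * (if k = j \<and> (x, k) \<in> R c then 1 else 0)) = (\<lambda>k. if k = j then (if (x, j) \<in> R c then M i j else 0) else 0)"
    by auto
  then show "(\<Sum>k\<in>UNIV. M i k * (if k = j \<and> (x, k) \<in> R c then 1 else 0)) = (if (x, j) \<in> R c then M i j else 0)"
    by (simp only: sum.delta[OF finite]) simp
qed

lemma nonss_dir:
  assumes H: "(2::'a::field) = 0" and a: "a \<le> d" "valency d R a = 2"
  shows "\<not> semisimple_alg (TT :: ('x, 'a) xmat set)"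
proof -
  have cardA: "card {w. (x, w) \<in> R a} = 2" using val_card[OF a(1)] a(2) by simp
  then obtain y where y: "(x, y) \<in> R a" by (metis (mono_tags, lifting) Collect_empty_eq card.empty zero_neq_numeral)
  have cly: "cl y = a" using cl_unique[OF a(1) y] by simp
  have Cy: "C y = {w. (x, w) \<in> R a}" unfolding C_def cly ..
  have sy: "sig y \<noteq> y"
  proof
    assume "sig y = y"
    then have "C y = {y}" using C_eq by simp
    then show False using cardA Cy by simp
  qed
  define z0 where "z0 = (mat_mult (dual_idem R x 0) (mat_mult (adj_mat R a) (dual_idem R x a)) :: ('x, 'a) xmat)"
  have z0T: "z0 \<in> TT" unfolding z0_def using a(1) by (intro T_mult dual_in adj_in) auto
  have z0f: "z0 = (\<lambda>i j. if i = x \<and> j \<in> C y then 1 else 0)"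
    unfolding z0_def mult_dual_left mult_dual_right R0 Cy adj_mat_def by (auto simp: fun_eq_iff)
  have z0nz: "z0 \<noteq> mat_zero" unfolding z0f mat_zero_def using C_self[of y] by (auto simp: fun_eq_iff)
  have nil: "\<forall>t\<in>TT. mat_mult z0 (mat_mult t z0) = mat_zero"
  proof
    fix t :: "('x, 'a) xmat" assume t: "t \<in> TT"
    have tc: "t (sig p) (sig q) = t p q" for p q using comm_T[OF t] unfolding commutes_def by simp
    have tz: "mat_mult t z0 = (\<lambda>k j. if j \<in> C y then t k x else 0)"
      unfolding z0f mat_mult_def by (auto simp: fun_eq_iff)
    have "(\<Sum>k\<in>C y. t k x) = 0"
      unfolding sum_C using sy tc[of y x] sig_x H by (simp add: mult_2[symmetric])
    note S = this
    show "mat_mult z0 (mat_mult t z0) = mat_zero"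
      unfolding tz unfolding z0f mat_mult_def mat_zero_def
    proof (intro ext)
      fix i j
      show "(\<Sum>k\<in>UNIV. (if i = x \<and> k \<in> C y then 1 else 0) * (if j \<in> C y then t k x else 0)) = (0::'a)"
      proof (cases "i = x \<and> j \<in> C y")
        case True
        then have "(\<Sum>k\<in>UNIV. (if i = x \<and> k \<in> C y then 1 else 0) * (if j \<in> C y then t k x else 0))
            = (\<Sum>k\<in>UNIV. if k \<in> C y then t k x else 0)" by (intro sum.cong) auto
        also have "\<dots> = (\<Sum>k\<in>UNIV \<inter> C y. t k x)" by (simp only: sum.inter_restrict[OF finite])
        finally show ?thesis using S by simp
      next
        case False
        then show ?thesis by (intro sum.neutral) auto
      qed
    qed
  qed
  have "z0 \<in> jacobson_radical TT"
    by (rule nil_in_rad[OF terwilliger_alg_def z0T nil])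
  then show ?thesis unfolding semisimple_alg_def using z0nz by auto
qed

end

lemma two_eq_0_iff: "(2::'a::field) = 0 \<longleftrightarrow> CHAR('a) = 2"
proof -
  have "(2::'a) = of_nat 2" by simp
  then have "(2::'a) = 0 \<longleftrightarrow> CHAR('a) dvd 2" using of_nat_eq_0_iff_char_dvd[of 2] by simp
  also have "\<dots> \<longleftrightarrow> CHAR('a) = 2"
  proof
    assume "CHAR('a) dvd 2"
    then have "CHAR('a) \<le> 2" by (rule dvd_imp_le) simp
    moreover have "CHAR('a) \<noteq> 0" using \<open>CHAR('a) dvd 2\<close> by (metis dvd_0_left_iff zero_neq_numeral)
    moreover have "CHAR('a) \<noteq> 1" using CHAR_not_1 by simp
    ultimately show "CHAR('a) = 2" by linarith
  qed simp
  finally show ?thesis .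
qed

theorem theoremB:
  fixes d :: nat and R :: "nat \<Rightarrow> ('x::finite \<times> 'x) set" and x :: 'x
  assumes "is_scheme d R"
    and "quasi_thin_scheme d R"
  shows "semisimple_alg (terwilliger_alg d R x :: ('x, 'a::field) xmat set)
         \<longleftrightarrow> (CHAR('a) \<noteq> 2 \<or> (CHAR('a) = 2 \<and> thin_scheme d R))"
proof -
  interpret qts d R x using assms by unfold_locales
  show ?thesis
  proof (cases "CHAR('a) = 2")
    case False
    then have "(2::'a) \<noteq> 0" using two_eq_0_iff by blast
    then show ?thesis using ss_dir[where 'a='a] False by blast
  next
    case True
    then have H: "(2::'a) = 0" using two_eq_0_iff by blast
    show ?thesis
    proof (cases "thin_scheme d R")
      case thin: True
      have "\<forall>z. sig z = z"
      proof
        fix z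
        have "card (C z) = 1" using C_card(2)[of z] thin cl(1)[of z] unfolding thin_scheme_def by simp
        then show "sig z = z" using C_eq[of z] by (cases "sig z = z") auto
      qed
      then show ?thesis using ss_dir[where 'a='a] True thin by blast
    next
      case nthin: False
      then obtain a where a: "a \<le> d" "valency d R a \<noteq> 1" unfolding thin_scheme_def by auto
      have "valency d R a \<le> 2" using assms(2) a(1) unfolding quasi_thin_scheme_def by simp
      moreover have "valency d R a \<noteq> 0"
      proof
        assume "valency d R a = 0"
        moreover obtain p q where pq: "(p, q) \<in> R a" using ne[OF a(1)] by auto
        ultimately have "card {w. (p, w) \<in> R a} = 0" using val_card[OF a(1), of p] by simp
        then show False using pq by simp
      qed
      ultimately have "valency d R a = 2" using a(2) by linarith
      then show ?thesis using nonss_dir[OF H a(1)] True nthin by blast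
    qed
  qed
qed


end
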